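(* Assume $\mathcal{W}^\ast=\sum_{k=1}^K\mathcal{W}^{\ast(k)}$ with $\|\boldsymbol{W}^{\ast(l)}_{(k)}\|_{S_\infty}\le\alpha$ for all $k\ne l$, and let $(\hat{\mathcal{W}}^{(k)})_k$ be a solution of $$\min_{\mathcal{W}^{(1)},\dots,\mathcal{W}^{(K)}}\ \tfrac12\Bigl\|\mathcal{Y}-\sum_{k}\mathcal{W}^{(k)}\Bigr\|_F^2+\lambda\sum_{k}\|\boldsymbol{W}^{(k)}_{(k)}\|_{S_1}\quad\text{s.t. } \|\boldsymbol{W}^{(k)}_{(l)}\|_{S_\infty}\le\alpha\ \ \forall\, l\ne k$$ (for some tensor $\mathcal{Y}$ and $\lambda>0$). Let $\Delta^{(k)}=\hat{\mathcal{W}}^{(k)}-\mathcal{W}^{\ast(k)}$ and $\Delta=\sum_{k=1}^K\Delta^{(k)}$. Then $$\frac12\sum_{k=1}^K\|\Delta^{(k)}\|_F^2\le\frac12\|\Delta\|_F^2+\alpha(K-1)\sum_{k=1}^K\|\boldsymbol{\Delta}^{(k)}_{(k)}\|_{S_1}.$$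
   Context: Tensors are elements of $\mathbb{R}^{n_1\times\cdots\times n_K}$ with $N=\prod_k n_k$; $\|\cdot\|_F$ is the Euclidean norm of the vectorization. For a tensor $\mathcal{W}^{(l)}$ (resp. $\Delta^{(k)}$), $\boldsymbol{W}^{(l)}_{(k)}$ (resp. $\boldsymbol{\Delta}^{(k)}_{(k)}$) in $\mathbb{R}^{n_k\times N/n_k}$ is its mode-$k$ unfolding (columns are mode-$k$ fibers). $\|\cdot\|_{S_1}$ is the trace norm and $\|\cdot\|_{S_\infty}$ the spectral norm; $\alpha\ge0$. *)

theory Defs
  imports "HOL-Analysis.Analysis"
begin

text \<open>Tensors of order K with dimensions n 0, ..., n (K-1) (modes indexed 0..K-1).
  A multi-index is an extensional function in PiE {..<K} (\<lambda>k. {..<n k});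
  a tensor is a real-valued function on multi-indices (only its values on the
  index set matter).\<close>

type_synonym tensor = "(nat \<Rightarrow> nat) \<Rightarrow> real"

definition idx_set :: "nat \<Rightarrow> (nat \<Rightarrow> nat) \<Rightarrow> (nat \<Rightarrow> nat) set" where
  "idx_set K n = PiE {..<K} (\<lambda>k. {..<n k})"

definition frob :: "nat \<Rightarrow> (nat \<Rightarrow> nat) \<Rightarrow> tensor \<Rightarrow> real" where
  "frob K n T = sqrt (\<Sum>x\<in>idx_set K n. (T x)\<^sup>2)"

text \<open>Mode-k unfolding: rows indexed by {..<n k}, columns by multi-indices of the
  remaining modes (column order is immaterial for the norms used).\<close>

definition unfold_cols :: "nat \<Rightarrow> (nat \<Rightarrow> nat) \<Rightarrow> nat \<Rightarrow> (nat \<Rightarrow> nat) set" where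
  "unfold_cols K n k = PiE ({..<K} - {k}) (\<lambda>j. {..<n j})"

definition unfold :: "nat \<Rightarrow> tensor \<Rightarrow> nat \<Rightarrow> (nat \<Rightarrow> nat) \<Rightarrow> real" where
  "unfold k T = (\<lambda>i c. T (c(k := i)))"

definition spec_norm :: "'r set \<Rightarrow> 'c set \<Rightarrow> ('r \<Rightarrow> 'c \<Rightarrow> real) \<Rightarrow> real" where
  "spec_norm R C A = Sup {sqrt (\<Sum>r\<in>R. (\<Sum>c\<in>C. A r c * v c)\<^sup>2) | v. (\<Sum>c\<in>C. (v c)\<^sup>2) \<le> 1}"

definition svd_decomp :: "'r set \<Rightarrow> 'c set \<Rightarrow> ('r \<Rightarrow> 'c \<Rightarrow> real) \<Rightarrow> nat \<Rightarrow> (nat \<Rightarrow> real)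
    \<Rightarrow> (nat \<Rightarrow> 'r \<Rightarrow> real) \<Rightarrow> (nat \<Rightarrow> 'c \<Rightarrow> real) \<Rightarrow> bool" where
  "svd_decomp R C A p \<sigma> u v \<longleftrightarrow>
     (\<forall>j<p. \<sigma> j \<ge> 0) \<and>
     (\<forall>j<p. \<forall>j'<p. (\<Sum>r\<in>R. u j r * u j' r) = (if j = j' then 1 else 0)) \<and>
     (\<forall>j<p. \<forall>j'<p. (\<Sum>c\<in>C. v j c * v j' c) = (if j = j' then 1 else 0)) \<and>
     (\<forall>r\<in>R. \<forall>c\<in>C. A r c = (\<Sum>j<p. \<sigma> j * u j r * v j c))"

definition trace_norm :: "'r set \<Rightarrow> 'c set \<Rightarrow> ('r \<Rightarrow> 'c \<Rightarrow> real) \<Rightarrow> real" where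
  "trace_norm R C A = (SOME s. \<exists>p \<sigma> u v. svd_decomp R C A p \<sigma> u v \<and> s = (\<Sum>j<p. \<sigma> j))"

definition spec_mode :: "nat \<Rightarrow> (nat \<Rightarrow> nat) \<Rightarrow> nat \<Rightarrow> tensor \<Rightarrow> real" where
  "spec_mode K n k T = spec_norm {..<n k} (unfold_cols K n k) (unfold k T)"

definition trace_mode :: "nat \<Rightarrow> (nat \<Rightarrow> nat) \<Rightarrow> nat \<Rightarrow> tensor \<Rightarrow> real" where
  "trace_mode K n k T = trace_norm {..<n k} (unfold_cols K n k) (unfold k T)"

definition feasible :: "nat \<Rightarrow> (nat \<Rightarrow> nat) \<Rightarrow> real \<Rightarrow> (nat \<Rightarrow> tensor) \<Rightarrow> bool" where
  "feasible K n \<alpha> W \<longleftrightarrow> (\<forall>k<K. \<forall>l<K. l \<noteq> k \<longrightarrow> spec_mode K n l (W k) \<le> \<alpha>)"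

definition objective :: "nat \<Rightarrow> (nat \<Rightarrow> nat) \<Rightarrow> tensor \<Rightarrow> real \<Rightarrow> (nat \<Rightarrow> tensor) \<Rightarrow> real" where
  "objective K n Y lam W =
     1/2 * (frob K n (\<lambda>x. Y x - (\<Sum>k<K. W k x)))\<^sup>2 + lam * (\<Sum>k<K. trace_mode K n k (W k))"

end

theory Submission
  imports Defs
begin


definition mv :: "'c set \<Rightarrow> ('r \<Rightarrow> 'c \<Rightarrow> real) \<Rightarrow> ('c \<Rightarrow> real) \<Rightarrow> 'r \<Rightarrow> real" where
  "mv C B w r = (\<Sum>c\<in>C. B r c * w c)"
definition QF :: "'r set \<Rightarrow> 'c set \<Rightarrow> ('r \<Rightarrow> 'c \<Rightarrow> real) \<Rightarrow> ('c \<Rightarrow> real) \<Rightarrow> real" where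
  "QF R C B w = (\<Sum>r\<in>R. (mv C B w r)\<^sup>2)"
definition nsq :: "'c set \<Rightarrow> ('c \<Rightarrow> real) \<Rightarrow> real" where
  "nsq C w = (\<Sum>c\<in>C. (w c)\<^sup>2)"

lemma QF_cont: "finite R \<Longrightarrow> finite C \<Longrightarrow>
  continuous_map (product_topology (\<lambda>_. euclideanreal) C) euclideanreal (QF R C B)"
  unfolding QF_def mv_def power2_eq_square
  by (intro continuous_map_sum continuous_map_real_mult continuous_map_real_mult_left
        continuous_map_product_projection[where X="\<lambda>_. euclideanreal", simplified]) auto

lemma nsq_cont: "finite C \<Longrightarrow>
  continuous_map (product_topology (\<lambda>_. euclideanreal) C) euclideanreal (nsq C)"
  unfolding nsq_def power2_eq_square
  by (intro continuous_map_sum continuous_map_real_mult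
        continuous_map_product_projection[where X="\<lambda>_. euclideanreal", simplified]) auto

lemma exists_max:
  assumes fR: "finite R" and fC: "finite C" and ne: "C \<noteq> {}"
  shows "\<exists>w. nsq C w = 1 \<and> (\<forall>z. QF R C B z \<le> QF R C B w * nsq C z)"
proof -
  let ?X = "product_topology (\<lambda>_. euclideanreal) C"
  define P where "P = PiE C (\<lambda>_. {-1..(1::real)})"
  define S where "S = {w \<in> P. nsq C w \<in> {1}}"
  have cP: "compactin ?X P" unfolding P_def
    by (simp add: compactin_PiE)
  have "Hausdorff_space ?X" by (simp add: Hausdorff_space_product_topology)
  hence "closedin ?X P" using cP by (rule compactin_imp_closedin)
  have "closedin ?X S" unfolding S_def
    by (rule closedin_continuous_map_preimage_gen[OF nsq_cont[OF fC]])
      (auto simp: \<open>closedin ?X P\<close> closed_closedin[symmetric])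
  hence cS: "compactin ?X S" by (intro closed_compactin[OF cP]) (auto simp: S_def)
  hence "compactin euclideanreal (QF R C B ` S)"
    by (rule image_compactin[OF _ QF_cont[OF fR fC]])
  hence cI: "compact (QF R C B ` S)" by (simp add: compactin_euclidean_iff)
  obtain c0 where c0: "c0 \<in> C" using ne by auto
  have "restrict (\<lambda>c. if c = c0 then 1 else 0) C \<in> S"
  proof -
    have "nsq C (restrict (\<lambda>c. if c = c0 then 1 else 0) C) = (\<Sum>c\<in>C. if c = c0 then 1 else 0)"
      unfolding nsq_def by (intro sum.cong) auto
    also have "\<dots> = 1" using c0 fC by simp
    finally show ?thesis unfolding S_def P_def by auto
  qed
  hence "QF R C B ` S \<noteq> {}" by auto
  from compact_attains_sup[OF cI this] obtain w where wS: "w \<in> S"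
    and wmax: "\<forall>y\<in>S. QF R C B y \<le> QF R C B w" by auto
  have "QF R C B z \<le> QF R C B w * nsq C z" for z
  proof (cases "nsq C z = 0")
    case True
    hence "\<forall>c\<in>C. z c = 0" using fC unfolding nsq_def by (simp add: sum_nonneg_eq_0_iff)
    hence "QF R C B z = 0" by (simp add: QF_def mv_def)
    thus ?thesis using True by simp
  next
    case False
    have nn: "nsq C z \<ge> 0" unfolding nsq_def by (simp add: sum_nonneg)
    define s where "s = sqrt (nsq C z)"
    have s0: "s > 0" using False nn by (simp add: s_def)
    have s2: "s\<^sup>2 = nsq C z" using nn by (simp add: s_def)
    define z' where "z' = restrict (\<lambda>c. z c / s) C"
    have "z' \<in> S"
    proof -
      have "z c / s \<in> {-1..1}" if "c \<in> C" for c
      proof -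
        have "(z c)\<^sup>2 \<le> nsq C z" unfolding nsq_def
          using that fC by (intro member_le_sum) auto
        hence "\<bar>z c\<bar> \<le> s" unfolding s_def by (simp add: real_le_rsqrt)
        moreover have "\<bar>z c / s\<bar> = \<bar>z c\<bar> / s" using s0 by simp
        ultimately have "\<bar>z c / s\<bar> \<le> 1" using s0 by simp
        thus ?thesis unfolding atLeastAtMost_iff abs_le_iff by auto
      qed
      moreover have "nsq C z' = 1"
      proof -
        have "nsq C z' = (\<Sum>c\<in>C. (z c)\<^sup>2 / s\<^sup>2)"
          unfolding nsq_def z'_def by (intro sum.cong) (auto simp: power_divide)
        also have "\<dots> = nsq C z / s\<^sup>2" by (simp add: nsq_def sum_divide_distrib)
        finally show ?thesis using s2 False by simp
      qed
      ultimately show ?thesis unfolding S_def P_def z'_def by (auto simp: PiE_iff)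
    qed
    hence "QF R C B z' \<le> QF R C B w" using wmax by auto
    moreover have "QF R C B z' = QF R C B z / s\<^sup>2"
    proof -
      have "mv C B z' r = mv C B z r / s" for r
        unfolding mv_def z'_def by (simp add: sum_divide_distrib)
      hence "(mv C B z' r)\<^sup>2 = (mv C B z r)\<^sup>2 / s\<^sup>2" for r by (simp add: power_divide)
      thus ?thesis unfolding QF_def by (simp add: sum_divide_distrib)
    qed
    ultimately have "QF R C B z / s\<^sup>2 \<le> QF R C B w" by simp
    hence "QF R C B z \<le> QF R C B w * s\<^sup>2" using s0 by (simp add: divide_le_eq)
    thus ?thesis using s2 by simp
  qed
  moreover have "nsq C w = 1" using wS by (simp add: S_def)
  ultimately show ?thesis by blast
qed



lemma swap2: fixes a d :: "_ \<Rightarrow> real" shows "(\<Sum>r\<in>R. a r * (\<Sum>c\<in>C. b r c * d c)) = (\<Sum>c\<in>C. d c * (\<Sum>r\<in>R. a r * b r c))"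
proof -
  have "(\<Sum>r\<in>R. a r * (\<Sum>c\<in>C. b r c * d c)) = (\<Sum>r\<in>R. \<Sum>c\<in>C. a r * (b r c * d c))"
    by (rule sum.cong[OF refl], rule sum_distrib_left)
  also have "\<dots> = (\<Sum>c\<in>C. \<Sum>r\<in>R. a r * (b r c * d c))" by (rule sum.swap)
  also have "\<dots> = (\<Sum>c\<in>C. d c * (\<Sum>r\<in>R. a r * b r c))" by (simp add: sum_distrib_left mult_ac)
  finally show ?thesis .
qed

lemma quad_zero:
  fixes a b :: real
  assumes all: "\<forall>e. 2*e*a + e\<^sup>2*b \<le> 0" and a0: "a \<ge> 0"
  shows "a = 0"
proof (rule ccontr)
  assume "a \<noteq> 0" hence ap: "a > 0" using a0 by simp
  define e where "e = a / (\<bar>b\<bar> + 1)"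
  have ep: "e > 0" using ap by (simp add: e_def add_pos_nonneg)
  have "e * \<bar>b\<bar> < a"
  proof -
    have "e * \<bar>b\<bar> = a * (\<bar>b\<bar> / (\<bar>b\<bar> + 1))" by (simp add: e_def)
    also have "\<dots> < a * 1" using ap by (intro mult_strict_left_mono) auto
    finally show ?thesis by simp
  qed
  moreover have "e * (-\<bar>b\<bar>) \<le> e * b" using ep by (intro mult_left_mono) auto
  ultimately have "e * b > - a" by simp
  hence "2*a + e*b > 0" using ap by linarith
  hence "e * (2*a + e*b) > 0" using ep by simp
  moreover have "e * (2*a + e*b) = 2*e*a + e\<^sup>2*b" by (simp add: algebra_simps power2_eq_square)
  ultimately show False using all by (metis not_le)
qed

lemma stationary:
  assumes fR: "finite R" and fC: "finite C" and nw: "nsq C w = 1"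
    and mx: "\<forall>z. QF R C B z \<le> QF R C B w * nsq C z"
  shows "\<forall>c\<in>C. (\<Sum>r\<in>R. B r c * mv C B w r) = QF R C B w * w c"
proof -
  define M where "M = QF R C B w"
  define g where "g c = (\<Sum>r\<in>R. B r c * mv C B w r) - M * w c" for c
  define P where "P = (\<Sum>r\<in>R. mv C B w r * mv C B g r)"
  define ip where "ip = (\<Sum>c\<in>C. w c * g c)"
  have mvlin: "mv C B (\<lambda>c. w c + e * g c) r = mv C B w r + e * mv C B g r" for e r
    unfolding mv_def by (simp add: algebra_simps sum.distrib sum_distrib_left)
  have QFe: "QF R C B (\<lambda>c. w c + e * g c) = M + 2*e*P + e\<^sup>2 * QF R C B g" for e
    unfolding QF_def mvlin M_def P_def
    by (simp add: power2_sum sum.distrib sum_distrib_left power_mult_distrib algebra_simps QF_def)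
  have nsqe: "nsq C (\<lambda>c. w c + e * g c) = 1 + 2*e*ip + e\<^sup>2 * nsq C g" for e
    using nw unfolding nsq_def ip_def
    by (simp add: power2_sum sum.distrib sum_distrib_left power_mult_distrib algebra_simps)
  have Pform: "P = (\<Sum>c\<in>C. g c * (\<Sum>r\<in>R. B r c * mv C B w r))"
    unfolding P_def mv_def[of C B g] using swap2[where a="mv C B w" and b=B and d=g and R=R and C=C]
    by (simp add: mult_ac)
  have "P - M * ip = (\<Sum>c\<in>C. g c * (\<Sum>r\<in>R. B r c * mv C B w r) - M * (w c * g c))"
    unfolding Pform ip_def by (simp only: sum_subtractf sum_distrib_left[of M])
  also have "\<dots> = (\<Sum>c\<in>C. g c * g c)"
  proof (intro sum.cong refl)
    fix c
    show "g c * (\<Sum>r\<in>R. B r c * mv C B w r) - M * (w c * g c) = g c * g c"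
      unfolding g_def by (simp add: algebra_simps)
  qed
  finally have "P - M * ip = (\<Sum>c\<in>C. g c * g c)" .
  hence aeq: "P - M * ip = nsq C g" by (simp add: nsq_def power2_eq_square)
  have "\<forall>e. 2*e*(nsq C g) + e\<^sup>2*(QF R C B g - M * nsq C g) \<le> 0"
  proof
    fix e
    have "M + 2*e*P + e\<^sup>2 * QF R C B g \<le> M * (1 + 2*e*ip + e\<^sup>2 * nsq C g)"
      using mx[rule_format, of "\<lambda>c. w c + e * g c"] QFe nsqe M_def by simp
    thus "2*e*(nsq C g) + e\<^sup>2*(QF R C B g - M * nsq C g) \<le> 0"
      unfolding aeq[symmetric] by (simp add: algebra_simps)
  qed
  hence "nsq C g = 0" by (rule quad_zero) (simp add: nsq_def sum_nonneg)
  hence "\<forall>c\<in>C. g c = 0" using fC unfolding nsq_def by (simp add: sum_nonneg_eq_0_iff)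
  thus ?thesis by (simp add: g_def M_def)
qed

definition orthn :: "'a set \<Rightarrow> (nat \<Rightarrow> 'a \<Rightarrow> real) \<Rightarrow> nat \<Rightarrow> bool" where
  "orthn S f t \<longleftrightarrow> (\<forall>j<t. \<forall>j'<t. (\<Sum>x\<in>S. f j x * f j' x) = (if j = j' then 1 else 0))"

lemma bessel:
  assumes fC: "finite C" and on: "orthn C v t"
  shows "(\<Sum>j<t. (\<Sum>c\<in>C. z c * v j c)\<^sup>2) \<le> nsq C z"
proof -
  define a where "a j = (\<Sum>c\<in>C. z c * v j c)" for j
  define S where "S c = (\<Sum>j<t. a j * v j c)" for c
  have Sv: "(\<Sum>c\<in>C. S c * v j' c) = a j'" if "j' < t" for j'
  proof -
    have "(\<Sum>c\<in>C. S c * v j' c) = (\<Sum>j<t. a j * (\<Sum>c\<in>C. v j c * v j' c))"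
      using swap2[where R="{..<t}" and C=C and a=a and b=v and d="v j'"] unfolding S_def by (simp add: mult_ac)
    also have "\<dots> = (\<Sum>j<t. if j = j' then a j else 0)"
    proof (intro sum.cong refl)
      fix j assume "j \<in> {..<t}"
      hence "(\<Sum>c\<in>C. v j c * v j' c) = (if j = j' then 1 else 0)"
        using on that unfolding orthn_def by simp
      thus "a j * (\<Sum>c\<in>C. v j c * v j' c) = (if j = j' then a j else 0)" by simp
    qed
    also have "\<dots> = a j'" using that by simp
    finally show ?thesis .
  qed
  have zS: "(\<Sum>c\<in>C. z c * S c) = (\<Sum>j<t. (a j)\<^sup>2)"
    using swap2[where R="{..<t}" and C=C and a=a and b=v and d=z] unfolding S_def
    by (simp add: a_def[symmetric] mult.commute[of "v _ _"] power2_eq_square)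
  have SS: "(\<Sum>c\<in>C. S c * S c) = (\<Sum>j<t. (a j)\<^sup>2)"
  proof -
    have "(\<Sum>c\<in>C. S c * S c) = (\<Sum>j<t. a j * (\<Sum>c\<in>C. S c * v j c))"
      using swap2[where R="{..<t}" and C=C and a=a and b=v and d=S]
      by (simp add: S_def[symmetric] mult.commute[of "v _ _"])
    also have "\<dots> = (\<Sum>j<t. (a j)\<^sup>2)" using Sv by (simp add: power2_eq_square)
    finally show ?thesis .
  qed
  have "0 \<le> (\<Sum>c\<in>C. (z c - S c)\<^sup>2)" by (simp add: sum_nonneg)
  also have "\<dots> = (\<Sum>c\<in>C. z c * z c - 2*(z c * S c) + S c * S c)"
    by (intro sum.cong) (auto simp: power2_eq_square algebra_simps)
  also have "\<dots> = nsq C z - 2 * (\<Sum>c\<in>C. z c * S c) + (\<Sum>c\<in>C. S c * S c)"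
    unfolding nsq_def by (simp add: sum.distrib sum_subtractf sum_distrib_left power2_eq_square)
  finally show ?thesis using zS SS by (simp add: a_def)
qed

lemma orth_card:
  assumes fC: "finite C" and on: "orthn C v t"
  shows "t \<le> card C"
proof -
  have per: "(\<Sum>j<t. (v j c)\<^sup>2) \<le> 1" if c: "c \<in> C" for c
  proof -
    define z where "z = (\<lambda>x. if x = c then 1 else (0::real))"
    have "(\<Sum>x\<in>C. z x * v j x) = (\<Sum>x\<in>C. if x = c then v j x else 0)" for j
      by (intro sum.cong) (auto simp: z_def)
    hence "(\<Sum>x\<in>C. z x * v j x) = v j c" for j using c fC by simp
    moreover have "nsq C z = (\<Sum>x\<in>C. if x = c then 1 else 0)"
      unfolding nsq_def by (intro sum.cong) (auto simp: z_def)
    hence "nsq C z = 1" using c fC by simp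
    ultimately show ?thesis using bessel[OF fC on, of z] by simp
  qed
  have "real t = (\<Sum>j<t. (\<Sum>c\<in>C. v j c * v j c))" using on unfolding orthn_def by simp
  also have "\<dots> = (\<Sum>c\<in>C. \<Sum>j<t. (v j c)\<^sup>2)" unfolding power2_eq_square by (rule sum.swap)
  also have "\<dots> \<le> (\<Sum>c\<in>C. 1)" using per by (intro sum_mono) auto
  finally show ?thesis by simp
qed



definition Bres :: "('r \<Rightarrow> 'c \<Rightarrow> real) \<Rightarrow> (nat \<Rightarrow> real) \<Rightarrow> (nat \<Rightarrow> 'r \<Rightarrow> real) \<Rightarrow> (nat \<Rightarrow> 'c \<Rightarrow> real) \<Rightarrow> nat \<Rightarrow> 'r \<Rightarrow> 'c \<Rightarrow> real" where
  "Bres A \<sigma> u v t = (\<lambda>r c. A r c - (\<Sum>j<t. \<sigma> j * u j r * v j c))"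

definition InvS :: "'r set \<Rightarrow> 'c set \<Rightarrow> ('r \<Rightarrow> 'c \<Rightarrow> real) \<Rightarrow> nat \<Rightarrow> (nat \<Rightarrow> real) \<Rightarrow> (nat \<Rightarrow> 'r \<Rightarrow> real) \<Rightarrow> (nat \<Rightarrow> 'c \<Rightarrow> real) \<Rightarrow> bool" where
  "InvS R C A t \<sigma> u v \<longleftrightarrow> (\<forall>j<t. \<sigma> j \<ge> 0) \<and> orthn R u t \<and> orthn C v t \<and>
     (\<forall>j<t. \<forall>r\<in>R. mv C (Bres A \<sigma> u v t) (v j) r = 0) \<and>
     (\<forall>j<t. \<forall>c\<in>C. (\<Sum>r\<in>R. u j r * Bres A \<sigma> u v t r c) = 0)"

lemma orthn_ext:
  assumes "orthn S f t" "\<forall>j<t. (\<Sum>x\<in>S. f j x * g x) = 0" "(\<Sum>x\<in>S. g x * g x) = 1"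
  shows "orthn S (f(t:=g)) (Suc t)"
  unfolding orthn_def
proof (intro allI impI)
  fix j j' assume j: "j < Suc t" and j': "j' < Suc t"
  show "(\<Sum>x\<in>S. (f(t := g)) j x * (f(t := g)) j' x) = (if j = j' then 1 else 0)"
  proof (cases "j = t")
    case True
    show ?thesis
    proof (cases "j' = t")
      case True thus ?thesis using \<open>j = t\<close> assms(3) by simp
    next
      case False
      hence "j' < t" using j' by simp
      hence "(\<Sum>x\<in>S. g x * f j' x) = 0" using assms(2) by (simp add: mult.commute)
      thus ?thesis using \<open>j = t\<close> False by simp
    qed
  next
    case False
    hence jt: "j < t" using j by simp
    show ?thesis
    proof (cases "j' = t")
      case True thus ?thesis using False jt assms(2) by simp
    next
      case False
      hence "j' < t" using j' by simp
      thus ?thesis using jt assms(1) \<open>j \<noteq> t\<close> False unfolding orthn_def by simp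
    qed
  qed
qed

lemma Bres_Suc:
  "Bres A (\<sigma>(t:=s)) (u(t:=x)) (v(t:=y)) (Suc t) r c = Bres A \<sigma> u v t r c - s * x r * y c"
proof -
  have "(\<Sum>j<t. (\<sigma>(t:=s)) j * (u(t:=x)) j r * (v(t:=y)) j c) = (\<Sum>j<t. \<sigma> j * u j r * v j c)"
    by (intro sum.cong) auto
  thus ?thesis unfolding Bres_def by simp
qed

lemma mv_sub: "mv C (\<lambda>r c. B r c - s * x r * w c) y r = mv C B y r - s * x r * (\<Sum>c\<in>C. w c * y c)"
  unfolding mv_def by (simp add: algebra_simps sum_subtractf sum_distrib_left)

lemma lmv_sub: fixes y :: "_ \<Rightarrow> real" shows "(\<Sum>r\<in>R. y r * (B r c - s * x r * w c)) = (\<Sum>r\<in>R. y r * B r c) - s * w c * (\<Sum>r\<in>R. y r * x r)"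
  by (simp add: algebra_simps sum_subtractf sum_distrib_left)

lemma defl_step:
  assumes fR: "finite R" and fC: "finite C" and Inv: "InvS R C A t \<sigma> u v"
    and r0: "r0 \<in> R" and c0: "c0 \<in> C" and nz: "Bres A \<sigma> u v t r0 c0 \<noteq> 0"
  shows "\<exists>\<sigma>' u' v'. InvS R C A (Suc t) \<sigma>' u' v'"
proof -
  define B where "B = Bres A \<sigma> u v t"
  have kv: "\<forall>j<t. \<forall>r\<in>R. mv C B (v j) r = 0" and ku: "\<forall>j<t. \<forall>c\<in>C. (\<Sum>r\<in>R. u j r * B r c) = 0"
    using Inv unfolding InvS_def B_def by auto
  have ne: "C \<noteq> {}" using c0 by auto
  obtain w where nw: "nsq C w = 1" and mx: "\<forall>z. QF R C B z \<le> QF R C B w * nsq C z"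
    using exists_max[OF fR fC ne] by blast
  define M where "M = QF R C B w"
  have Mpos: "M > 0"
  proof -
    define z where "z = (\<lambda>x. if x = c0 then 1 else (0::real))"
    have "mv C B z r = (\<Sum>x\<in>C. if x = c0 then B r x else 0)" for r
      unfolding mv_def by (intro sum.cong) (auto simp: z_def)
    hence mvz: "mv C B z r = B r c0" for r using c0 fC by simp
    have "nsq C z = (\<Sum>x\<in>C. if x = c0 then 1 else 0)"
      unfolding nsq_def by (intro sum.cong) (auto simp: z_def)
    hence nz1: "nsq C z = 1" using c0 fC by simp
    have "0 < (B r0 c0)\<^sup>2" using nz by (simp add: B_def)
    also have "\<dots> \<le> (\<Sum>r\<in>R. (B r c0)\<^sup>2)" using r0 fR by (intro member_le_sum) auto
    also have "\<dots> = QF R C B z" unfolding QF_def mvz by simp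
    also have "\<dots> \<le> M" using mx nz1 unfolding M_def by (metis mult.right_neutral)
    finally show ?thesis .
  qed
  have st: "\<forall>c\<in>C. (\<Sum>r\<in>R. B r c * mv C B w r) = M * w c"
    using stationary[OF fR fC nw mx] unfolding M_def .
  define s where "s = sqrt M"
  have s0: "s > 0" using Mpos by (simp add: s_def)
  have ss: "s * s = M" using Mpos by (simp add: s_def)
  define x where "x r = mv C B w r / s" for r
  have sx: "s * x r = mv C B w r" for r using s0 by (simp add: x_def)
  have o1: "\<forall>j<t. (\<Sum>c\<in>C. v j c * w c) = 0"
  proof (intro allI impI)
    fix j assume j: "j < t"
    have "M * (\<Sum>c\<in>C. v j c * w c) = (\<Sum>c\<in>C. v j c * (M * w c))"
      by (simp add: sum_distrib_left mult_ac)
    also have "\<dots> = (\<Sum>c\<in>C. v j c * (\<Sum>r\<in>R. mv C B w r * B r c))"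
      using st by (intro sum.cong) (auto simp: mult.commute)
    also have "\<dots> = (\<Sum>r\<in>R. mv C B w r * (\<Sum>c\<in>C. B r c * v j c))"
      using swap2[where a="mv C B w" and b=B and d="v j" and R=R and C=C] by simp
    also have "\<dots> = 0" using kv j unfolding mv_def by simp
    finally show "(\<Sum>c\<in>C. v j c * w c) = 0" using Mpos by simp
  qed
  have o2: "\<forall>j<t. (\<Sum>r\<in>R. u j r * x r) = 0"
  proof (intro allI impI)
    fix j assume j: "j < t"
    have "(\<Sum>r\<in>R. u j r * x r) = (\<Sum>r\<in>R. u j r * mv C B w r) / s"
      unfolding x_def sum_divide_distrib by simp
    also have "\<dots> = (\<Sum>r\<in>R. u j r * (\<Sum>c\<in>C. B r c * w c)) / s"
      unfolding mv_def ..
    also have "(\<Sum>r\<in>R. u j r * (\<Sum>c\<in>C. B r c * w c)) = (\<Sum>c\<in>C. w c * (\<Sum>r\<in>R. u j r * B r c))"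
      by (rule swap2)
    also have "\<dots> = 0" using ku j by simp
    finally show "(\<Sum>r\<in>R. u j r * x r) = 0" by simp
  qed
  have o3: "(\<Sum>c\<in>C. w c * w c) = 1" using nw by (simp add: nsq_def power2_eq_square)
  have o4: "(\<Sum>r\<in>R. x r * x r) = 1"
  proof -
    have "(\<Sum>r\<in>R. x r * x r) = (\<Sum>r\<in>R. (mv C B w r)\<^sup>2) / (s * s)"
      unfolding x_def by (simp add: sum_divide_distrib power2_eq_square)
    also have "\<dots> = 1" using Mpos ss unfolding M_def QF_def by simp
    finally show ?thesis .
  qed
  have on_u: "orthn R (u(t:=x)) (Suc t)"
    using Inv o2 o4 by (intro orthn_ext) (auto simp: InvS_def)
  have on_v: "orthn C (v(t:=w)) (Suc t)"
    using Inv o1 o3 by (intro orthn_ext) (auto simp: InvS_def)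
  have B': "Bres A (\<sigma>(t:=s)) (u(t:=x)) (v(t:=w)) (Suc t) = (\<lambda>r c. B r c - s * x r * w c)"
    by (intro ext) (simp add: Bres_Suc B_def)
  have kv': "\<forall>j<Suc t. \<forall>r\<in>R. mv C (\<lambda>r c. B r c - s * x r * w c) ((v(t:=w)) j) r = 0"
  proof (intro allI impI ballI)
    fix j r assume j: "j < Suc t" and r: "r \<in> R"
    show "mv C (\<lambda>r c. B r c - s * x r * w c) ((v(t:=w)) j) r = 0"
    proof (cases "j = t")
      case True thus ?thesis unfolding mv_sub using o3 sx by simp
    next
      case False
      hence "j < t" using j by simp
      moreover have "(\<Sum>c\<in>C. w c * v j c) = 0" using o1 \<open>j < t\<close> by (simp add: mult.commute)
      ultimately show ?thesis unfolding mv_sub using False kv r by simp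
    qed
  qed
  have ku': "\<forall>j<Suc t. \<forall>c\<in>C. (\<Sum>r\<in>R. (u(t:=x)) j r * (B r c - s * x r * w c)) = 0"
  proof (intro allI impI ballI)
    fix j c assume j: "j < Suc t" and c: "c \<in> C"
    show "(\<Sum>r\<in>R. (u(t:=x)) j r * (B r c - s * x r * w c)) = 0"
    proof (cases "j = t")
      case True
      have "(\<Sum>r\<in>R. x r * B r c) = (\<Sum>r\<in>R. B r c * mv C B w r) / s"
        unfolding x_def by (simp add: sum_divide_distrib mult.commute)
      also have "\<dots> = M * w c / s" using st c by simp
      also have "\<dots> = s * w c" using s0 ss[symmetric] by (simp add: field_simps)
      finally have "(\<Sum>r\<in>R. x r * B r c) = s * w c" .
      thus ?thesis using True o4 by (simp add: lmv_sub)
    next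
      case False
      hence "j < t" using j by simp
      thus ?thesis using False ku c o2 by (simp add: lmv_sub)
    qed
  qed
  have "InvS R C A (Suc t) (\<sigma>(t:=s)) (u(t:=x)) (v(t:=w))"
    unfolding InvS_def B' using Inv on_u on_v kv' ku' s0
    by (auto simp: InvS_def less_Suc_eq)
  thus ?thesis by blast
qed

lemma svd_from_inv:
  assumes fR: "finite R" and fC: "finite C"
  shows "InvS R C A t \<sigma> u v \<Longrightarrow> \<exists>p \<sigma> u v. svd_decomp R C A p \<sigma> u v"
proof (induction "card C - t" arbitrary: t \<sigma> u v rule: less_induct)
  case less
  show ?case
  proof (cases "\<forall>r\<in>R. \<forall>c\<in>C. Bres A \<sigma> u v t r c = 0")
    case True
    have "svd_decomp R C A t \<sigma> u v"
      using less.prems True unfolding svd_decomp_def InvS_def orthn_def Bres_def by auto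
    thus ?thesis by blast
  next
    case False
    then obtain r0 c0 where "r0 \<in> R" "c0 \<in> C" "Bres A \<sigma> u v t r0 c0 \<noteq> 0" by blast
    from defl_step[OF fR fC less.prems this] obtain \<sigma>' u' v' where
      I': "InvS R C A (Suc t) \<sigma>' u' v'" by blast
    hence "Suc t \<le> card C" using orth_card[OF fC] unfolding InvS_def by blast
    hence "card C - Suc t < card C - t" by simp
    from less.hyps[OF this I'] show ?thesis .
  qed
qed

lemma svd_exists:
  assumes "finite R" "finite C"
  shows "\<exists>p \<sigma> u v. svd_decomp R C A p \<sigma> u v"
  by (rule svd_from_inv[OF assms, of A 0 "\<lambda>_. 0" "\<lambda>_ _. 0" "\<lambda>_ _. 0"])
     (simp add: InvS_def orthn_def)

lemma trace_norm_ex: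
  assumes "finite R" "finite C"
  shows "\<exists>p \<sigma> u v. svd_decomp R C A p \<sigma> u v \<and> trace_norm R C A = (\<Sum>j<p. \<sigma> j)"
proof -
  have "\<exists>s. \<exists>p \<sigma> u v. svd_decomp R C A p \<sigma> u v \<and> s = (\<Sum>j<p. \<sigma> j)"
    using svd_exists[OF assms, of A] by blast
  from someI_ex[OF this] show ?thesis unfolding trace_norm_def by blast
qed



lemma abs_inner_le: "\<bar>\<Sum>i\<in>A. f i * g i\<bar> \<le> L2_set f A * L2_set g A"
proof -
  have "\<bar>\<Sum>i\<in>A. f i * g i\<bar> \<le> (\<Sum>i\<in>A. \<bar>f i * g i\<bar>)" by (rule sum_abs)
  also have "\<dots> = (\<Sum>i\<in>A. \<bar>f i\<bar> * \<bar>g i\<bar>)" by (simp add: abs_mult)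
  also have "\<dots> \<le> L2_set f A * L2_set g A" by (rule L2_set_mult_ineq)
  finally show ?thesis .
qed

lemma L2_unit: "nsq C v \<le> 1 \<Longrightarrow> L2_set v C \<le> 1"
  unfolding L2_set_def nsq_def by simp

lemma spec_upper:
  assumes fR: "finite R" and fC: "finite C" and nv: "nsq C v \<le> 1"
  shows "L2_set (mv C W v) R \<le> spec_norm R C W"
proof -
  define S where "S = {sqrt (\<Sum>r\<in>R. (\<Sum>c\<in>C. W r c * v c)\<^sup>2) | v. (\<Sum>c\<in>C. (v c)\<^sup>2) \<le> 1}"
  have bd: "bdd_above S"
  proof (rule bdd_aboveI)
    fix y assume "y \<in> S"
    then obtain v where y: "y = sqrt (\<Sum>r\<in>R. (\<Sum>c\<in>C. W r c * v c)\<^sup>2)" and v: "nsq C v \<le> 1"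
      unfolding S_def nsq_def by auto
    have "(\<Sum>c\<in>C. W r c * v c)\<^sup>2 \<le> (\<Sum>c\<in>C. (W r c)\<^sup>2)" for r
    proof -
      have "\<bar>\<Sum>c\<in>C. W r c * v c\<bar> \<le> L2_set (W r) C * L2_set v C" by (rule abs_inner_le)
      also have "\<dots> \<le> L2_set (W r) C * 1"
        using L2_unit[OF v] by (intro mult_left_mono) (auto simp: L2_set_nonneg)
      finally have "\<bar>\<Sum>c\<in>C. W r c * v c\<bar> \<le> L2_set (W r) C" by simp
      hence "\<bar>\<Sum>c\<in>C. W r c * v c\<bar>\<^sup>2 \<le> (L2_set (W r) C)\<^sup>2"
        by (intro power_mono) auto
      thus ?thesis by (simp add: L2_set_def sum_nonneg)
    qed
    hence "(\<Sum>r\<in>R. (\<Sum>c\<in>C. W r c * v c)\<^sup>2) \<le> (\<Sum>r\<in>R. \<Sum>c\<in>C. (W r c)\<^sup>2)"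
      by (intro sum_mono) auto
    thus "y \<le> sqrt (\<Sum>r\<in>R. \<Sum>c\<in>C. (W r c)\<^sup>2)" unfolding y by simp
  qed
  have "L2_set (mv C W v) R \<in> S" using nv unfolding S_def L2_set_def mv_def nsq_def by auto
  hence "L2_set (mv C W v) R \<le> Sup S" using bd by (rule cSup_upper)
  thus ?thesis unfolding spec_norm_def S_def .
qed

lemma spec_diff:
  assumes fR: "finite R" and fC: "finite C" and nv: "nsq C v \<le> 1"
  shows "L2_set (mv C (\<lambda>r c. W1 r c - W2 r c) v) R \<le> spec_norm R C W1 + spec_norm R C W2"
proof -
  have "mv C (\<lambda>r c. W1 r c - W2 r c) v = (\<lambda>r. mv C W1 v r + (- mv C W2 v r))"
    unfolding mv_def by (auto simp: algebra_simps sum_subtractf)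
  hence "L2_set (mv C (\<lambda>r c. W1 r c - W2 r c) v) R \<le> L2_set (mv C W1 v) R + L2_set (\<lambda>r. - mv C W2 v r) R"
    using L2_set_triangle_ineq by metis
  also have "L2_set (\<lambda>r. - mv C W2 v r) R = L2_set (mv C W2 v) R" by (simp add: L2_set_def)
  finally show ?thesis using spec_upper[OF fR fC nv, of W1] spec_upper[OF fR fC nv, of W2] by linarith
qed

lemma svd_inner:
  assumes "svd_decomp R C A p \<sigma> u v"
  shows "(\<Sum>r\<in>R. \<Sum>c\<in>C. A r c * B r c) = (\<Sum>j<p. \<sigma> j * (\<Sum>r\<in>R. u j r * mv C B (v j) r))"
proof -
  have A: "\<forall>r\<in>R. \<forall>c\<in>C. A r c = (\<Sum>j<p. \<sigma> j * u j r * v j c)" using assms unfolding svd_decomp_def by blast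
  have "(\<Sum>r\<in>R. \<Sum>c\<in>C. A r c * B r c) = (\<Sum>r\<in>R. \<Sum>c\<in>C. \<Sum>j<p. \<sigma> j * u j r * v j c * B r c)"
    using A by (intro sum.cong refl) (simp add: sum_distrib_right)
  also have "\<dots> = (\<Sum>r\<in>R. \<Sum>j<p. \<Sum>c\<in>C. \<sigma> j * u j r * v j c * B r c)"
    by (intro sum.cong refl) (rule sum.swap)
  also have "\<dots> = (\<Sum>j<p. \<Sum>r\<in>R. \<Sum>c\<in>C. \<sigma> j * u j r * v j c * B r c)"
    by (rule sum.swap)
  also have "\<dots> = (\<Sum>j<p. \<sigma> j * (\<Sum>r\<in>R. u j r * mv C B (v j) r))"
    unfolding mv_def by (intro sum.cong refl) (simp add: sum_distrib_left mult_ac)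
  finally show ?thesis .
qed



lemma cross_bound:
  assumes fR: "finite R" and fC: "finite C" and s1: "spec_norm R C W1 \<le> \<alpha>" and s2: "spec_norm R C W2 \<le> \<alpha>"
  shows "(\<Sum>r\<in>R. \<Sum>c\<in>C. A r c * (W1 r c - W2 r c)) \<ge> - (2*\<alpha>) * trace_norm R C A"
proof -
  obtain p \<sigma> u v where sv: "svd_decomp R C A p \<sigma> u v" and tr: "trace_norm R C A = (\<Sum>j<p. \<sigma> j)"
    using trace_norm_ex[OF fR fC] by blast
  have I: "\<bar>\<Sum>r\<in>R. u j r * mv C (\<lambda>r c. W1 r c - W2 r c) (v j) r\<bar> \<le> 2*\<alpha>" if j: "j < p" for j
  proof -
    have "(\<Sum>r\<in>R. u j r * u j r) = 1" using sv j unfolding svd_decomp_def by auto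
    hence Lu: "L2_set (u j) R = 1" by (simp add: L2_set_def power2_eq_square)
    have "(\<Sum>c\<in>C. v j c * v j c) = 1" using sv j unfolding svd_decomp_def by auto
    hence nv: "nsq C (v j) \<le> 1" by (simp add: nsq_def power2_eq_square)
    have "\<bar>\<Sum>r\<in>R. u j r * mv C (\<lambda>r c. W1 r c - W2 r c) (v j) r\<bar>
        \<le> L2_set (u j) R * L2_set (mv C (\<lambda>r c. W1 r c - W2 r c) (v j)) R" by (rule abs_inner_le)
    also have "\<dots> \<le> spec_norm R C W1 + spec_norm R C W2"
      using Lu spec_diff[OF fR fC nv, of W1 W2] by simp
    finally show ?thesis using s1 s2 by linarith
  qed
  have sg: "\<sigma> j \<ge> 0" if "j < p" for j using sv that unfolding svd_decomp_def by auto
  have "(\<Sum>r\<in>R. \<Sum>c\<in>C. A r c * (W1 r c - W2 r c))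
      = (\<Sum>j<p. \<sigma> j * (\<Sum>r\<in>R. u j r * mv C (\<lambda>r c. W1 r c - W2 r c) (v j) r))"
    by (rule svd_inner[OF sv])
  also have "\<dots> \<ge> (\<Sum>j<p. - (2*\<alpha>) * \<sigma> j)"
  proof (intro sum_mono)
    fix j assume "j \<in> {..<p}"
    hence j: "j < p" by simp
    have "- (2*\<alpha>) * \<sigma> j = \<sigma> j * (- (2*\<alpha>))" by simp
    also have "\<dots> \<le> \<sigma> j * (\<Sum>r\<in>R. u j r * mv C (\<lambda>r c. W1 r c - W2 r c) (v j) r)"
      using I[OF j] sg[OF j] by (intro mult_left_mono) auto
    finally show "- (2*\<alpha>) * \<sigma> j \<le> \<sigma> j * (\<Sum>r\<in>R. u j r * mv C (\<lambda>r c. W1 r c - W2 r c) (v j) r)" .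
  qed
  finally show ?thesis by (simp add: tr sum_distrib_left)
qed

lemma idx_reindex:
  assumes k: "k < K"
  shows "(\<Sum>x\<in>idx_set K n. f x) = (\<Sum>i\<in>{..<n k}. \<Sum>c\<in>unfold_cols K n k. f (c(k:=i)))"
proof -
  define h where "h = (\<lambda>(i::nat, c::nat\<Rightarrow>nat). c(k:=i))"
  have bij: "bij_betw h ({..<n k} \<times> unfold_cols K n k) (idx_set K n)"
  proof (rule bij_betwI')
    fix a b assume a: "a \<in> {..<n k} \<times> unfold_cols K n k" and b: "b \<in> {..<n k} \<times> unfold_cols K n k"
    obtain i c where ai: "a = (i, c)" by (cases a)
    obtain i' c' where bi: "b = (i', c')" by (cases b)
    have ck: "c k = undefined" "c' k = undefined"
      using a b ai bi unfolding unfold_cols_def by (auto simp: PiE_def extensional_def)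
    show "(h a = h b) = (a = b)"
    proof
      assume "h a = h b"
      hence eq: "c(k:=i) = c'(k:=i')" by (simp add: h_def ai bi)
      hence "i = i'" by (metis fun_upd_same)
      moreover have "c = c'"
      proof
        fix j show "c j = c' j"
          using eq ck by (cases "j = k") (auto dest: fun_cong[where x=j])
      qed
      ultimately show "a = b" using ai bi by simp
    qed simp
  next
    fix a assume a: "a \<in> {..<n k} \<times> unfold_cols K n k"
    obtain i c where ai: "a = (i, c)" by (cases a)
    show "h a \<in> idx_set K n"
      using a ai k unfolding h_def unfold_cols_def idx_set_def by (auto simp: PiE_iff extensional_def)
  next
    fix x assume x: "x \<in> idx_set K n"
    show "\<exists>a\<in>{..<n k} \<times> unfold_cols K n k. x = h a"
    proof (intro bexI)
      show "x = h (x k, x(k:=undefined))" by (simp add: h_def)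
      show "(x k, x(k:=undefined)) \<in> {..<n k} \<times> unfold_cols K n k"
        using x k unfolding idx_set_def unfold_cols_def by (auto simp: PiE_iff extensional_def)
    qed
  qed
  have "(\<Sum>i\<in>{..<n k}. \<Sum>c\<in>unfold_cols K n k. f (c(k:=i))) = (\<Sum>a\<in>{..<n k} \<times> unfold_cols K n k. f (h a))"
    unfolding h_def by (simp add: sum.cartesian_product split_beta)
  also have "\<dots> = (\<Sum>x\<in>idx_set K n. f x)" by (rule sum.reindex_bij_betw[OF bij])
  finally show ?thesis by simp
qed



lemma frob_sq: "(frob K n T)\<^sup>2 = (\<Sum>x\<in>idx_set K n. (T x)\<^sup>2)"
  unfolding frob_def by (simp add: sum_nonneg)

lemma finite_idx: "finite (idx_set K n)" unfolding idx_set_def by (simp add: finite_PiE)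
lemma finite_cols: "finite (unfold_cols K n k)" unfolding unfold_cols_def by (simp add: finite_PiE)

lemma sq_sum_split:
  fixes a :: "nat \<Rightarrow> real"
  shows "(\<Sum>k<K. a k)\<^sup>2 = (\<Sum>k<K. (a k)\<^sup>2) + (\<Sum>k<K. \<Sum>l\<in>{..<K}-{k}. a k * a l)"
proof -
  have "(\<Sum>k<K. a k)\<^sup>2 = (\<Sum>k<K. \<Sum>l<K. a k * a l)"
    by (simp add: power2_eq_square sum_product)
  also have "\<dots> = (\<Sum>k<K. (a k)\<^sup>2 + (\<Sum>l\<in>{..<K}-{k}. a k * a l))"
  proof (intro sum.cong refl)
    fix k assume "k \<in> {..<K}"
    hence "(\<Sum>l<K. a k * a l) = a k * a k + (\<Sum>l\<in>{..<K}-{k}. a k * a l)"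
      by (simp add: sum.remove)
    thus "(\<Sum>l<K. a k * a l) = (a k)\<^sup>2 + (\<Sum>l\<in>{..<K}-{k}. a k * a l)" by (simp add: power2_eq_square)
  qed
  also have "\<dots> = (\<Sum>k<K. (a k)\<^sup>2) + (\<Sum>k<K. \<Sum>l\<in>{..<K}-{k}. a k * a l)" by (simp add: sum.distrib)
  finally show ?thesis .
qed

lemma aux: fixes P X a :: real assumes "-2*a \<le> X" shows "1/2*P \<le> 1/2*(P+X) + a" using assms by (simp add: field_simps)

theorem lemma4:
  fixes K :: nat and n :: "nat \<Rightarrow> nat" and \<alpha> lam :: real
    and Y Wst :: tensor and Wstar What :: "nat \<Rightarrow> tensor"
  assumes "\<forall>k<K. n k > 0"
    and "\<alpha> \<ge> 0" and "lam > 0"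
    and "Wst = (\<lambda>x. \<Sum>k<K. Wstar k x)"
    and "\<forall>k<K. \<forall>l<K. k \<noteq> l \<longrightarrow> spec_mode K n k (Wstar l) \<le> \<alpha>"
    and "feasible K n \<alpha> What"
    and "\<forall>W. feasible K n \<alpha> W \<longrightarrow> objective K n Y lam What \<le> objective K n Y lam W"
  shows "let \<Delta>k = (\<lambda>k x. What k x - Wstar k x); \<Delta> = (\<lambda>x. \<Sum>k<K. \<Delta>k k x) in
     1/2 * (\<Sum>k<K. (frob K n (\<Delta>k k))\<^sup>2)
       \<le> 1/2 * (frob K n \<Delta>)\<^sup>2 + \<alpha> * (real K - 1) * (\<Sum>k<K. trace_mode K n k (\<Delta>k k))"
proof -
  define D where "D = (\<lambda>k x. What k x - Wstar k x)"
  define I where "I = idx_set K n"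
  define tr where "tr k = trace_mode K n k (D k)" for k
  have cross: "(\<Sum>x\<in>I. D k x * D l x) \<ge> - (2*\<alpha>) * tr k"
    if k: "k < K" and l: "l < K" and kl: "l \<noteq> k" for k l
  proof -
    have "(\<Sum>x\<in>I. D k x * D l x)
        = (\<Sum>i\<in>{..<n k}. \<Sum>c\<in>unfold_cols K n k. unfold k (D k) i c * (unfold k (What l) i c - unfold k (Wstar l) i c))"
      unfolding I_def idx_reindex[OF k] by (simp add: unfold_def D_def)
    also have "\<dots> \<ge> - (2*\<alpha>) * trace_norm {..<n k} (unfold_cols K n k) (unfold k (D k))"
    proof (rule cross_bound)
      show "spec_norm {..<n k} (unfold_cols K n k) (unfold k (What l)) \<le> \<alpha>"
        using assms(6) k l kl unfolding feasible_def spec_mode_def by blast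
      show "spec_norm {..<n k} (unfold_cols K n k) (unfold k (Wstar l)) \<le> \<alpha>"
        using assms(5) k l kl unfolding spec_mode_def by auto
    qed (auto simp: finite_cols)
    finally show ?thesis unfolding tr_def trace_mode_def .
  qed
  have "(\<Sum>x\<in>I. (\<Sum>k<K. D k x)\<^sup>2) = (\<Sum>x\<in>I. (\<Sum>k<K. (D k x)\<^sup>2)) + (\<Sum>x\<in>I. \<Sum>k<K. \<Sum>l\<in>{..<K}-{k}. D k x * D l x)"
    by (simp add: sq_sum_split sum.distrib)
  also have "(\<Sum>x\<in>I. (\<Sum>k<K. (D k x)\<^sup>2)) = (\<Sum>k<K. \<Sum>x\<in>I. (D k x)\<^sup>2)" by (rule sum.swap)
  also have "(\<Sum>x\<in>I. \<Sum>k<K. \<Sum>l\<in>{..<K}-{k}. D k x * D l x) = (\<Sum>k<K. \<Sum>l\<in>{..<K}-{k}. \<Sum>x\<in>I. D k x * D l x)"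
    by (simp add: sum.swap[of _ I])
  finally have split: "(\<Sum>x\<in>I. (\<Sum>k<K. D k x)\<^sup>2) = (\<Sum>k<K. \<Sum>x\<in>I. (D k x)\<^sup>2) + (\<Sum>k<K. \<Sum>l\<in>{..<K}-{k}. \<Sum>x\<in>I. D k x * D l x)" .
  have "(\<Sum>k<K. \<Sum>l\<in>{..<K}-{k}. \<Sum>x\<in>I. D k x * D l x) \<ge> (\<Sum>k<K. \<Sum>l\<in>{..<K}-{k}. - (2*\<alpha>) * tr k)"
    using cross by (intro sum_mono) auto
  also have "(\<Sum>k<K. \<Sum>l\<in>{..<K}-{k}. - (2*\<alpha>) * tr k) = (\<Sum>k<K. - (2*\<alpha>) * (real K - 1) * tr k)"
  proof (intro sum.cong refl)
    fix k assume "k \<in> {..<K}"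
    hence "card ({..<K}-{k}) = K - 1" and "K \<ge> 1" by auto
    thus "(\<Sum>l\<in>{..<K}-{k}. - (2*\<alpha>) * tr k) = - (2*\<alpha>) * (real K - 1) * tr k" by (simp add: of_nat_diff)
  qed
  also have "(\<Sum>k<K. - (2*\<alpha>) * (real K - 1) * tr k) = - (2*\<alpha>) * (real K - 1) * (\<Sum>k<K. tr k)"
    by (rule sum_distrib_left[symmetric])
  finally have cr: "(\<Sum>k<K. \<Sum>l\<in>{..<K}-{k}. \<Sum>x\<in>I. D k x * D l x) \<ge> - (2*\<alpha>) * (real K - 1) * (\<Sum>k<K. tr k)"
    .
  have "1/2 * (\<Sum>k<K. (frob K n (D k))\<^sup>2) \<le> 1/2 * (frob K n (\<lambda>x. \<Sum>k<K. D k x))\<^sup>2 + \<alpha> * (real K - 1) * (\<Sum>k<K. tr k)"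
  proof -
    have e: "- (2*\<alpha>) * (real K - 1) * (\<Sum>k<K. tr k) = -2 * (\<alpha> * (real K - 1) * (\<Sum>k<K. tr k))" by simp
    show ?thesis unfolding frob_sq I_def[symmetric] split
      by (rule aux[where a="\<alpha> * (real K - 1) * (\<Sum>k<K. tr k)"]) (use cr[unfolded e] in assumption)
  qed
  thus ?thesis unfolding Let_def D_def tr_def by simp
qed


end
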